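(* Let $FD_{j,2}(\alpha,\lambda,n)$ be the number of partitions with perimeter $n$, largest part $\alpha$, exactly $\lambda$ parts, and exactly $j$ distinct part sizes appearing at least twice. Then, as formal power series, $$\sum_{\alpha,\lambda,n\geq 1}\sum_{j\geq 0} FD_{j,2}(\alpha,\lambda,n)\,x^\alpha y^\lambda z^j q^n=\frac{xyq\,(1-(1-z)yq)}{1-(x+y)q+(1-z)xy^2q^3}.$$
   Context: A partition is a finite nonincreasing sequence of positive integers (its parts); its size is not fixed. For a partition $\pi$ with largest part $\alpha(\pi)$ and number of parts $\lambda(\pi)$, its perimeter is $\alpha(\pi)+\lambda(\pi)-1$. (Note $FD_{j,2}(\alpha,\lambda,n)=0$ unless $n=\alpha+\lambda-1$.) *)

theory Defs
  imports "HOL-Computational_Algebra.Formal_Power_Series"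
begin

definition is_partition :: "nat list \<Rightarrow> bool" where
  "is_partition p \<longleftrightarrow> sorted_wrt (\<ge>) p \<and> (\<forall>k\<in>set p. 0 < k)"

definition largest_part :: "nat list \<Rightarrow> nat" where
  "largest_part p = Max (insert 0 (set p))"

definition num_parts :: "nat list \<Rightarrow> nat" where
  "num_parts p = length p"

definition perimeter :: "nat list \<Rightarrow> nat" where
  "perimeter p = largest_part p + num_parts p - 1"

definition repeated_sizes :: "nat list \<Rightarrow> nat" where
  "repeated_sizes p = card {k \<in> set p. 2 \<le> count_list p k}"

definition FD2 :: "nat \<Rightarrow> nat \<Rightarrow> nat \<Rightarrow> nat \<Rightarrow> nat" where
  "FD2 j a l n = card {p. is_partition p \<and> perimeter p = n \<and> largest_part p = a
                          \<and> num_parts p = l \<and> repeated_sizes p = j}"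

text \<open>Four-variable power series: outermost variable q, then x, y, z.\<close>
type_synonym fps4 = "int fps fps fps fps"

definition varQ :: fps4 where "varQ = fps_X"
definition varX :: fps4 where "varX = fps_const fps_X"
definition varY :: fps4 where "varY = fps_const (fps_const fps_X)"
definition varZ :: fps4 where "varZ = fps_const (fps_const (fps_const fps_X))"

definition FD2_gf :: fps4 where
  "FD2_gf = Abs_fps (\<lambda>n. Abs_fps (\<lambda>a. Abs_fps (\<lambda>l. Abs_fps (\<lambda>j.
     if 1 \<le> a \<and> 1 \<le> l \<and> 1 \<le> n then int (FD2 j a l n) else 0))))"

end

theory Submission imports Defs begin
unbundle fps_syntax

definition PP :: "nat \<Rightarrow> nat \<Rightarrow> nat list set" where
  "PP a l = {p. is_partition p \<and> largest_part p = a \<and> length p = l}"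

definition cnt :: "nat \<Rightarrow> nat \<Rightarrow> nat \<Rightarrow> nat" where
  "cnt a l j = card {p \<in> PP a l. repeated_sizes p = j}"

lemma le_largest: "x \<in> set p \<Longrightarrow> x \<le> largest_part p"
  unfolding largest_part_def by simp

lemma finite_PP: "finite (PP a l)"
proof -
  have "PP a l \<subseteq> {xs. set xs \<subseteq> {0..a} \<and> length xs = l}"
    unfolding PP_def using le_largest by fastforce
  moreover have "finite {xs. set xs \<subseteq> {0..a::nat} \<and> length xs = l}"
    by (rule finite_lists_length_eq) simp
  ultimately show ?thesis by (rule finite_subset)
qed

lemma FD2_cnt: "FD2 j a l n = (if n = a + l - 1 then cnt a l j else 0)"
proof -
  have "{p. is_partition p \<and> perimeter p = n \<and> largest_part p = a
                          \<and> num_parts p = l \<and> repeated_sizes p = j}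
       = (if n = a + l - 1 then {p \<in> PP a l. repeated_sizes p = j} else {})"
    by (simp add: PP_def perimeter_def num_parts_def) blast
  then show ?thesis unfolding FD2_def cnt_def by simp
qed

lemma largest_nonempty: "p \<noteq> [] \<Longrightarrow> largest_part p = Max (set p)"
  unfolding largest_part_def by (simp add: Max_insert)

lemma PP_a0: "a \<ge> 1 \<Longrightarrow> PP a 0 = {}"
  by (auto simp: PP_def largest_part_def)

lemma PP_0l: assumes "l \<ge> 1" shows "PP 0 l = {}"
proof -
  { fix p :: "nat list" assume "is_partition p" "largest_part p = 0" "1 \<le> length p"
  then obtain x where "x \<in> set p" by (cases p) auto
  with \<open>is_partition p\<close> have "0 < x" by (auto simp: is_partition_def)
  with le_largest[OF \<open>x \<in> set p\<close>] \<open>largest_part p = 0\<close> have False by simp }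
  then show ?thesis using assms by (auto simp: PP_def)
qed

lemma cnt_a0: "a \<ge> 1 \<Longrightarrow> cnt a 0 j = 0"
  by (simp add: cnt_def PP_a0)
lemma cnt_0l: "l \<ge> 1 \<Longrightarrow> cnt 0 l j = 0"
  by (simp add: cnt_def PP_0l)

lemma PP_1: "l \<ge> 1 \<Longrightarrow> PP 1 l = {replicate l 1}"
proof
  assume l: "l \<ge> 1"
  show "PP 1 l \<subseteq> {replicate l 1}"
  proof
    fix p assume "p \<in> PP 1 l"
    then have p: "is_partition p" "largest_part p = 1" "length p = l" by (auto simp: PP_def)
    have "\<forall>x\<in>set p. x = 1"
    proof
      fix x assume "x \<in> set p"
      with p le_largest[of x p] show "x = 1" by (auto simp: is_partition_def)
    qed
    with p show "p \<in> {replicate l 1}" by (simp add: replicate_eqI)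
  qed
  show "{replicate l 1} \<subseteq> PP 1 l"
    using l by (auto simp: PP_def is_partition_def largest_part_def sorted_wrt_iff_nth_less)
qed

lemma count_list_replicate1: "count_list (replicate l x) y = (if x = y then l else 0)"
  by (induction l) auto

lemma rep_replicate1: "repeated_sizes (replicate l (1::nat)) = (if l \<ge> 2 then 1 else 0)"
proof -
  have "{k \<in> set (replicate l (1::nat)). 2 \<le> count_list (replicate l 1) k} = (if l \<ge> 2 then {1} else {})"
    by (cases "l = 0") (auto simp: count_list_replicate1)
  then show ?thesis unfolding repeated_sizes_def by simp
qed

lemma cnt_1: "l \<ge> 1 \<Longrightarrow> cnt 1 l j = (if j = (if l \<ge> 2 then 1 else 0) then 1 else 0)"
proof -
  assume "l \<ge> 1"
  then have "{p \<in> PP 1 l. repeated_sizes p = j} = (if repeated_sizes (replicate l 1) = j then {replicate l 1} else {})"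
    using PP_1[of l] by auto
  then show ?thesis unfolding cnt_def using rep_replicate1[of l] by auto
qed

lemma is_part_map_Suc: "is_partition (map Suc q) \<longleftrightarrow> sorted_wrt (\<ge>) q"
  by (simp add: is_partition_def sorted_wrt_map)

lemma lp_map_Suc: "q \<noteq> [] \<Longrightarrow> largest_part (map Suc q) = Suc (largest_part q)"
  by (simp add: largest_nonempty mono_Max_commute[symmetric] mono_Suc)

lemma rep_map_Suc: "repeated_sizes (map Suc q) = repeated_sizes q"
proof -
  have "{k \<in> set (map Suc q). 2 \<le> count_list (map Suc q) k} = Suc ` {k \<in> set q. 2 \<le> count_list q k}"
    by (auto simp: count_list_map_conv[OF inj_Suc])
  then show ?thesis unfolding repeated_sizes_def by (simp add: card_image)
qed

lemma L1:
  assumes a: "a \<ge> 2"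
  shows "{p \<in> PP a l. 1 \<notin> set p \<and> R p} = map Suc ` {q \<in> PP (a-1) l. R (map Suc q)}"
proof
  show "map Suc ` {q \<in> PP (a-1) l. R (map Suc q)} \<subseteq> {p \<in> PP a l. 1 \<notin> set p \<and> R p}"
  proof
    fix p assume "p \<in> map Suc ` {q \<in> PP (a-1) l. R (map Suc q)}"
    then obtain q where q: "p = map Suc q" "q \<in> PP (a-1) l" "R (map Suc q)" by auto
    then have qp: "is_partition q" "largest_part q = a - 1" "length q = l" by (auto simp: PP_def)
    have "q \<noteq> []" using qp a by (auto simp: largest_part_def)
    then have "largest_part p = a" using q qp a lp_map_Suc by simp
    moreover have "1 \<notin> set p" using q qp by (auto simp: is_partition_def)
    moreover have "sorted_wrt (\<ge>) q" using qp(1) by (simp add: is_partition_def)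
    then have "is_partition p" using q(1) is_part_map_Suc by simp
    ultimately show "p \<in> {p \<in> PP a l. 1 \<notin> set p \<and> R p}" using q qp by (auto simp: PP_def)
  qed
  show "{p \<in> PP a l. 1 \<notin> set p \<and> R p} \<subseteq> map Suc ` {q \<in> PP (a-1) l. R (map Suc q)}"
  proof
    fix p assume "p \<in> {p \<in> PP a l. 1 \<notin> set p \<and> R p}"
    then have p: "is_partition p" "largest_part p = a" "length p = l" "1 \<notin> set p" "R p"
      by (auto simp: PP_def)
    define q where "q = map (\<lambda>k. k - 1) p"
    have pos: "\<forall>k\<in>set p. 0 < k" using p by (simp add: is_partition_def)
    have pq: "p = map Suc q" unfolding q_def using pos by (induction p) auto
    have "p \<noteq> []" using p a by (auto simp: largest_part_def)
    then have qne: "q \<noteq> []" by (simp add: q_def)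
    have gt1: "\<forall>k\<in>set p. 1 < k"
    proof
      fix k assume "k \<in> set p"
      then have "0 < k" "k \<noteq> 1" using pos p(4) by auto
      then show "1 < k" by linarith
    qed
    have "sorted_wrt (\<ge>) q" using p pq is_part_map_Suc by simp
    moreover have "\<forall>k\<in>set q. 0 < k" using gt1 by (auto simp: q_def)
    ultimately have "is_partition q" by (simp add: is_partition_def)
    moreover have "largest_part q = a - 1" using lp_map_Suc[OF qne] pq p by simp
    moreover have "length q = l" using p by (simp add: q_def)
    ultimately show "p \<in> map Suc ` {q \<in> PP (a-1) l. R (map Suc q)}"
      using pq p by (auto simp: PP_def)
  qed
qed

lemma butlast_one:
  assumes "sorted_wrt (\<ge>) p" "\<forall>k\<in>set p. 0 < (k::nat)" "1 \<in> set p"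
  shows "p = butlast p @ [1]"
proof -
  have ne: "p \<noteq> []" using assms by auto
  then have pe: "p = butlast p @ [last p]" by simp
  have "last p \<in> set p" using ne by simp
  then have "0 < last p" using assms by auto
  moreover have "\<forall>x\<in>set (butlast p). last p \<le> x"
    using assms(1) pe sorted_wrt_append[of "(\<ge>)" "butlast p" "[last p]"] by simp
  moreover have "1 \<in> set (butlast p) \<or> 1 = last p" using assms(3) pe
    by (metis Un_iff empty_iff empty_set set_ConsD set_append)
  ultimately have "last p = 1" by fastforce
  then show ?thesis using pe by simp
qed

lemma lp_app1: "largest_part (r @ [1]) = max 1 (largest_part r)"
proof (cases "r = []")
  case True then show ?thesis by (simp add: largest_part_def)
next
  case False
  then have "set r \<noteq> {}" by simp
  then show ?thesis unfolding largest_part_def by (simp add: Max_insert max_def)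
qed

lemma L2:
  assumes a: "a \<ge> 2" and l: "l \<ge> 1"
  shows "{p \<in> PP a l. 1 \<in> set p \<and> R p} = (\<lambda>r. r @ [1]) ` {r \<in> PP a (l-1). R (r @ [1])}"
proof
  show "(\<lambda>r. r @ [1]) ` {r \<in> PP a (l-1). R (r @ [1])} \<subseteq> {p \<in> PP a l. 1 \<in> set p \<and> R p}"
  proof
    fix p assume "p \<in> (\<lambda>r. r @ [1]) ` {r \<in> PP a (l-1). R (r @ [1])}"
    then obtain r where r: "p = r @ [1]" "r \<in> PP a (l-1)" "R (r @ [1])" by auto
    then have rp: "is_partition r" "largest_part r = a" "length r = l - 1" by (auto simp: PP_def)
    have "is_partition p" using rp(1) r(1) by (auto simp: is_partition_def sorted_wrt_append)
    moreover have "largest_part p = a" using r(1) rp(2) a lp_app1 by simp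
    ultimately show "p \<in> {p \<in> PP a l. 1 \<in> set p \<and> R p}" using r rp l by (auto simp: PP_def)
  qed
  show "{p \<in> PP a l. 1 \<in> set p \<and> R p} \<subseteq> (\<lambda>r. r @ [1]) ` {r \<in> PP a (l-1). R (r @ [1])}"
  proof
    fix p assume "p \<in> {p \<in> PP a l. 1 \<in> set p \<and> R p}"
    then have p: "is_partition p" "largest_part p = a" "length p = l" "1 \<in> set p" "R p"
      by (auto simp: PP_def)
    define r where "r = butlast p"
    have pr: "p = r @ [1]" unfolding r_def using p butlast_one by (auto simp: is_partition_def)
    have "is_partition r" using p(1) pr by (auto simp: is_partition_def sorted_wrt_append)
    moreover have "largest_part r = a" using p(2) pr a lp_app1[of r] by (simp add: max_def split: if_splits)
    moreover have "length r = l - 1" using p(3) pr by simp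
    ultimately show "p \<in> (\<lambda>r. r @ [1]) ` {r \<in> PP a (l-1). R (r @ [1])}"
      using pr p by (auto simp: PP_def)
  qed
qed

lemma in_set_count: "0 < count_list xs x \<Longrightarrow> x \<in> set xs"
  by (metis count_list_0_iff less_irrefl)

lemma rep_app1: "repeated_sizes (r @ [1]) = repeated_sizes r + (if count_list r 1 = 1 then 1 else 0)"
proof -
  let ?A = "{k \<in> set r. 2 \<le> count_list r k}"
  let ?B = "{k \<in> set (r @ [1]). 2 \<le> count_list (r @ [1]) k}"
  have fin: "finite ?A" by simp
  show ?thesis
  proof (cases "count_list r 1 = 1")
    case True
    then have "?B = insert 1 ?A" by (auto simp: count_list_0_iff[symmetric])
    moreover have "1 \<notin> ?A" using True by auto
    ultimately show ?thesis using True fin unfolding repeated_sizes_def by simp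
  next
    case False
    then have "?B = ?A" by (auto intro: in_set_count)
    then show ?thesis using False unfolding repeated_sizes_def by simp
  qed
qed

lemma rep_app1_Suc: "repeated_sizes (r @ [Suc 0]) = repeated_sizes r + (if count_list r (Suc 0) = Suc 0 then 1 else 0)"
  using rep_app1[of r] by simp

lemma inj_app1: "inj (\<lambda>r::nat list. r @ [1])"
  by (rule injI) simp

lemma card_V:
  assumes a: "a \<ge> 2"
  shows "card {r \<in> PP a (l-1). count_list r 1 = 1 \<and> repeated_sizes r = j'}
         = (if l \<ge> 2 then cnt (a-1) (l-2) j' else 0)"
proof (cases "l \<ge> 2")
  case False
  then have "l - 1 = 0" by simp
  then have "PP a (l-1) = {}" using PP_a0[of a] a by simp
  then show ?thesis using False by simp
next
  case True
  have "{r \<in> PP a (l-1). count_list r 1 = 1 \<and> repeated_sizes r = j'}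
      = {r \<in> PP a (l-1). 1 \<in> set r \<and> (count_list r 1 = 1 \<and> repeated_sizes r = j')}"
    by (auto intro: in_set_count)
  also have "\<dots> = (\<lambda>r. r @ [1]) ` {s \<in> PP a (l-1-1). count_list (s @ [1]) 1 = 1 \<and> repeated_sizes (s @ [1]) = j'}"
    using L2[OF a, of "l-1"] True by simp
  also have "{s \<in> PP a (l-1-1). count_list (s @ [1]) 1 = 1 \<and> repeated_sizes (s @ [1]) = j'}
      = {s \<in> PP a (l-2). 1 \<notin> set s \<and> repeated_sizes s = j'}"
    by (auto simp: rep_app1_Suc count_list_0_iff numeral_2_eq_2)
  also have "\<dots> = map Suc ` {q \<in> PP (a-1) (l-2). repeated_sizes (map Suc q) = j'}"
    by (rule L1[OF a])
  finally have "card {r \<in> PP a (l-1). count_list r 1 = 1 \<and> repeated_sizes r = j'}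
     = card {q \<in> PP (a-1) (l-2). repeated_sizes q = j'}"
    using card_image[OF inj_on_subset[OF inj_app1 subset_UNIV]]
       card_image[OF inj_on_subset[OF inj_mapI[OF inj_Suc] subset_UNIV]]
    by (simp add: rep_map_Suc)
  then show ?thesis using True by (simp add: cnt_def)
qed

lemma cnt_rec:
  assumes a: "a \<ge> 2" and l: "l \<ge> 1"
  shows "int (cnt a l j) = int (cnt (a-1) l j) + int (cnt a (l-1) j)
           - (if l \<ge> 2 then int (cnt (a-1) (l-2) j) else 0)
           + (if l \<ge> 2 \<and> j \<ge> 1 then int (cnt (a-1) (l-2) (j-1)) else 0)"
proof -
  let ?S = "{p \<in> PP a l. repeated_sizes p = j}"
  let ?S1 = "{p \<in> PP a l. 1 \<notin> set p \<and> repeated_sizes p = j}"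
  let ?S2 = "{p \<in> PP a l. 1 \<in> set p \<and> repeated_sizes p = j}"
  let ?T = "{r \<in> PP a (l-1). repeated_sizes (r @ [1]) = j}"
  let ?W = "{r \<in> PP a (l-1). repeated_sizes r = j}"
  let ?V = "\<lambda>j'. {r \<in> PP a (l-1). count_list r 1 = 1 \<and> repeated_sizes r = j'}"
  have fin: "finite (PP a l')" for l' by (rule finite_PP)
  have "?S = ?S1 \<union> ?S2" by auto
  moreover have "?S1 \<inter> ?S2 = {}" by auto
  ultimately have c1: "card ?S = card ?S1 + card ?S2"
    using fin[of l] by (simp add: card_Un_disjoint)
  have "?S1 = map Suc ` {q \<in> PP (a-1) l. repeated_sizes (map Suc q) = j}" by (rule L1[OF a])
  then have c2: "card ?S1 = cnt (a-1) l j"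
    by (simp add: card_image inj_on_subset[OF inj_mapI[OF inj_Suc]] rep_map_Suc cnt_def)
  have "?S2 = (\<lambda>r. r @ [1]) ` ?T" by (rule L2[OF a l])
  then have c3: "card ?S2 = card ?T"
    using card_image[OF inj_on_subset[OF inj_app1 subset_UNIV]] by simp
  have "?T = (?W - ?V j) \<union> (if j \<ge> 1 then ?V (j-1) else {})"
    by (auto simp: rep_app1_Suc split: if_splits)
  moreover have "(?W - ?V j) \<inter> (if j \<ge> 1 then ?V (j-1) else {}) = {}" by auto
  moreover have "?V j \<subseteq> ?W" by auto
  ultimately have c4: "card ?T = (card ?W - card (?V j)) + (if j \<ge> 1 then card (?V (j-1)) else 0)"
    using fin[of "l-1"] by (simp add: card_Un_disjoint card_Diff_subset)
  have c5: "card (?V j) \<le> card ?W" using fin[of "l-1"] by (intro card_mono) auto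
  have e: "cnt a l j = cnt (a-1) l j + (cnt a (l-1) j - card (?V j)) + (if j \<ge> 1 then card (?V (j-1)) else 0)"
    using c1 c2 c3 c4 unfolding cnt_def[of a l j] cnt_def[of a "l-1" j] by simp
  have c6: "card (?V j) \<le> cnt a (l-1) j" using c5 unfolding cnt_def by simp
  have v1: "card (?V j) = (if l \<ge> 2 then cnt (a-1) (l-2) j else 0)" by (rule card_V[OF a])
  have v2: "card (?V (j-1)) = (if l \<ge> 2 then cnt (a-1) (l-2) (j-1) else 0)" by (rule card_V[OF a])
  show ?thesis
  proof (cases "j \<ge> 1")
    case True
    then show ?thesis using e c6 v1 v2 by (simp add: of_nat_diff)
  next
    case False
    then show ?thesis using e c6 v1 by (simp add: of_nat_diff)
  qed
qed

lemma nf: "FD2_gf * (1 - (varX + varY) * varQ + (1 - varZ) * varX * varY ^ 2 * varQ ^ 3)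
  = FD2_gf - varQ * (varX * FD2_gf) - varQ * (varY * FD2_gf)
   + varQ^3 * (varX * (varY * (varY * FD2_gf)))
   - varQ^3 * (varZ * (varX * (varY * (varY * FD2_gf))))"
  by (simp add: algebra_simps power2_eq_square)

lemma nf2: "varX * varY * varQ * (1 - (1 - varZ) * varY * varQ) = 
  varQ * (varX * (varY * 1)) - varQ * (varQ * (varX * (varY * (varY * 1))))
  + varQ * (varQ * (varZ * (varX * (varY * (varY * 1)))))"
  by (simp add: algebra_simps power2_eq_square)

lemma Q_nth: "(varQ^k * f) $ n = (if n < k then 0 else f $ (n - k))"
  unfolding varQ_def by (rule fps_X_power_mult_nth)
lemma Q1_nth: "(varQ * f) $ n = (if n = 0 then 0 else f $ (n - 1))"
  unfolding varQ_def by simp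
lemma X_nth: "(varX * f) $ n $ a = (if a = 0 then 0 else f $ n $ (a - 1))"
  unfolding varX_def by simp
lemma Y_nth: "(varY * f) $ n $ a $ l = (if l = 0 then 0 else f $ n $ a $ (l - 1))"
  unfolding varY_def by simp
lemma Z_nth: "(varZ * f) $ n $ a $ l $ j = (if j = 0 then 0 else f $ n $ a $ l $ (j - 1))"
  unfolding varZ_def by simp

definition g :: "nat \<Rightarrow> nat \<Rightarrow> nat \<Rightarrow> nat \<Rightarrow> int" where
 "g n a l j = (if 1 \<le> a \<and> 1 \<le> l \<and> 1 \<le> n then int (FD2 j a l n) else 0)"

lemma G_nth: "FD2_gf $ n $ a $ l $ j = g n a l j"
  by (simp add: FD2_gf_def g_def)


lemma one4_nth: "(1::int fps fps fps fps) $ n $ a $ l $ j = (if n = 0 \<and> a = 0 \<and> l = 0 \<and> j = 0 then 1 else 0)"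
  by simp

lemma lhs_nth: "(FD2_gf * (1 - (varX + varY) * varQ + (1 - varZ) * varX * varY ^ 2 * varQ ^ 3)) $ n $ a $ l $ j
  = g n a l j - (if n \<ge> 1 \<and> a \<ge> 1 then g (n-1) (a-1) l j else 0)
     - (if n \<ge> 1 \<and> l \<ge> 1 then g (n-1) a (l-1) j else 0)
     + (if n \<ge> 3 \<and> a \<ge> 1 \<and> l \<ge> 2 then g (n-3) (a-1) (l-2) j else 0)
     - (if n \<ge> 3 \<and> a \<ge> 1 \<and> l \<ge> 2 \<and> j \<ge> 1 then g (n-3) (a-1) (l-2) (j-1) else 0)"
  unfolding nf by (simp add: Q_nth Q1_nth X_nth Y_nth Z_nth G_nth numeral_2_eq_2 del: power_Suc)

lemma r1: "(varQ * (varX * (varY * (1::int fps fps fps fps)))) $ n $ a $ l $ j = (if n = 1 \<and> a = 1 \<and> l = 1 \<and> j = 0 then 1 else 0)"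
  unfolding varX_def varY_def varZ_def varQ_def by (simp; auto)
lemma r2: "(varQ * (varQ * (varX * (varY * (varY * (1::int fps fps fps fps)))))) $ n $ a $ l $ j = (if n = 2 \<and> a = 1 \<and> l = 2 \<and> j = 0 then 1 else 0)"
  unfolding varX_def varY_def varZ_def varQ_def by (simp; auto)
lemma r3: "(varQ * (varQ * (varZ * (varX * (varY * (varY * (1::int fps fps fps fps))))))) $ n $ a $ l $ j = (if n = 2 \<and> a = 1 \<and> l = 2 \<and> j = 1 then 1 else 0)"
  unfolding varX_def varY_def varZ_def varQ_def by (simp; auto)

lemma rhs_nth: "(varX * varY * varQ * (1 - (1 - varZ) * varY * varQ)) $ n $ a $ l $ j
  = (if n = 1 \<and> a = 1 \<and> l = 1 \<and> j = 0 then 1 else 0) - (if n = 2 \<and> a = 1 \<and> l = 2 \<and> j = 0 then 1 else 0)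
    + (if n = 2 \<and> a = 1 \<and> l = 2 \<and> j = 1 then 1 else 0)"
  unfolding nf2 fps_add_nth fps_sub_nth r1 r2 r3 by (rule refl)

definition c :: "nat \<Rightarrow> nat \<Rightarrow> nat \<Rightarrow> int" where
  "c a l j = (if 1 \<le> a \<and> 1 \<le> l then int (cnt a l j) else 0)"

lemma g_eq: "g n a l j = (if n + 1 = a + l then c a l j else 0)"
  unfolding g_def c_def FD2_cnt by auto

lemma c_rec:
  assumes "a \<ge> 1" "l \<ge> 1"
  shows "c a l j = c (a-1) l j + c a (l-1) j - c (a-1) (l-2) j
     + (if j \<ge> 1 then c (a-1) (l-2) (j-1) else 0)
     + (if a = 1 \<and> l = 1 \<and> j = 0 then 1 else 0) - (if a = 1 \<and> l = 2 \<and> j = 0 then 1 else 0)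
     + (if a = 1 \<and> l = 2 \<and> j = 1 then 1 else 0)"
proof (cases "a = 1")
  case True
  show ?thesis
  proof (cases "l \<ge> 2")
    case l2: True
    then show ?thesis using True cnt_1[of l] cnt_1[of "l-1"] by (auto simp: c_def)
  next
    case False
    then have "l = 1" using assms by simp
    then show ?thesis using True cnt_1[of l] by (auto simp: c_def)
  qed
next
  case False
  then have a2: "a \<ge> 2" using assms by simp
  have h0: "c a l j = int (cnt a l j)" using assms by (simp add: c_def)
  have h1: "c (a-1) l j = int (cnt (a-1) l j)" using a2 assms by (simp add: c_def)
  have h2: "c a (l-1) j = int (cnt a (l-1) j)" using a2 assms cnt_a0[of a] by (cases "l = 1") (simp_all add: c_def)
  have h3: "c (a-1) (l-2) j' = (if l \<ge> 2 then int (cnt (a-1) (l-2) j') else 0)" for j'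
    using a2 assms cnt_a0[of "a-1"] by (cases "l = 2") (auto simp: c_def)
  show ?thesis using cnt_rec[OF a2 assms(2), of j] h0 h1 h2 h3[of j] h3[of "j-1"] a2
    by simp
qed

lemma c0: "a = 0 \<or> l = 0 \<Longrightarrow> c a l j = 0"
  unfolding c_def by auto

lemma g_zero: "a = 0 \<or> l = 0 \<Longrightarrow> g n a l j = 0"
  unfolding g_eq using c0 by simp

lemma g_ne: "n + 1 \<noteq> a + l \<Longrightarrow> g n a l j = 0"
  unfolding g_eq by simp

lemma g_eqc: "n + 1 = a + l \<Longrightarrow> g n a l j = c a l j"
  unfolding g_eq by simp

lemma pointwise: "g n a l j - (if n \<ge> 1 \<and> a \<ge> 1 then g (n-1) (a-1) l j else 0)
     - (if n \<ge> 1 \<and> l \<ge> 1 then g (n-1) a (l-1) j else 0)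
     + (if n \<ge> 3 \<and> a \<ge> 1 \<and> l \<ge> 2 then g (n-3) (a-1) (l-2) j else 0)
     - (if n \<ge> 3 \<and> a \<ge> 1 \<and> l \<ge> 2 \<and> j \<ge> 1 then g (n-3) (a-1) (l-2) (j-1) else 0)
  = (if n = 1 \<and> a = 1 \<and> l = 1 \<and> j = 0 then 1 else 0) - (if n = 2 \<and> a = 1 \<and> l = 2 \<and> j = 0 then 1 else 0)
    + (if n = 2 \<and> a = 1 \<and> l = 2 \<and> j = 1 then 1 else 0)"
  (is "?L = ?R")
proof (cases "a \<ge> 1 \<and> l \<ge> 1")
  case False
  then have z: "a = 0 \<or> l = 0" by auto
  have t0: "g n a l j = 0" using z by (rule g_zero)
  have t1: "g (n-1) (a-1) l j = 0" using z by (intro g_zero) auto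
  have t2: "g (n-1) a (l-1) j = 0" using z by (intro g_zero) auto
  have t3: "g (n-3) (a-1) (l-2) j' = 0" for j' using z by (intro g_zero) auto
  have r: "\<not> (a = 1 \<and> l = k)" "\<not> (a = 1 \<and> l = 1)" if "k \<ge> 1" for k using z that by auto
  show ?thesis using z by (auto simp only: t0 t1 t2 t3 if_False if_True) auto
next
  case True
  show ?thesis
  proof (cases "n + 1 = a + l")
    case False
    have t0: "g n a l j = 0" using False by (rule g_ne)
    have t1: "(if n \<ge> 1 \<and> a \<ge> 1 then g (n-1) (a-1) l j else 0) = 0"
    proof (cases "n \<ge> 1 \<and> a \<ge> 1")
      case True
      then have h: "n - 1 + 1 \<noteq> (a - 1) + l" using False by arith
      show ?thesis using True g_ne[OF h] by simp
    qed auto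
    have t2: "(if n \<ge> 1 \<and> l \<ge> 1 then g (n-1) a (l-1) j else 0) = 0"
    proof (cases "n \<ge> 1 \<and> l \<ge> 1")
      case True
      then have h: "n - 1 + 1 \<noteq> a + (l - 1)" using False by arith
      show ?thesis using True g_ne[OF h] by simp
    qed auto
    have t3: "(if n \<ge> 3 \<and> a \<ge> 1 \<and> l \<ge> 2 then g (n-3) (a-1) (l-2) j' else 0) = 0" for j'
    proof (cases "n \<ge> 3 \<and> a \<ge> 1 \<and> l \<ge> 2")
      case True
      then have h: "n - 3 + 1 \<noteq> (a - 1) + (l - 2)" using False by arith
      show ?thesis using True g_ne[OF h] by simp
    qed auto
    have t4: "(if n \<ge> 3 \<and> a \<ge> 1 \<and> l \<ge> 2 \<and> j \<ge> 1 then g (n-3) (a-1) (l-2) (j-1) else 0) = 0"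
      using t3[of "j-1"] by (cases "j \<ge> 1") auto
    have r1: "\<not> (n = 1 \<and> a = 1 \<and> l = 1 \<and> j = 0)" using False by auto
    have r2: "\<not> (n = 2 \<and> a = 1 \<and> l = 2 \<and> j = j0)" for j0 using False by auto
    show ?thesis unfolding t0 t1 t2 t3 t4 using r1 r2[of 0] r2[of 1] by simp
  next
    case eq: True
    have t0: "g n a l j = c a l j" using eq by (rule g_eqc)
    have t1: "(if n \<ge> 1 \<and> a \<ge> 1 then g (n-1) (a-1) l j else 0) = c (a-1) l j"
    proof (cases "n \<ge> 1")
      case True
      then have h: "n - 1 + 1 = (a - 1) + l" using eq \<open>a \<ge> 1 \<and> l \<ge> 1\<close> by arith
      show ?thesis using True \<open>a \<ge> 1 \<and> l \<ge> 1\<close> g_eqc[OF h] by simp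
    next
      case False then have "a = 1" using eq \<open>a \<ge> 1 \<and> l \<ge> 1\<close> by simp
      then show ?thesis using False by (simp add: c0)
    qed
    have t2: "(if n \<ge> 1 \<and> l \<ge> 1 then g (n-1) a (l-1) j else 0) = c a (l-1) j"
    proof (cases "n \<ge> 1")
      case True
      then have h: "n - 1 + 1 = a + (l - 1)" using eq \<open>a \<ge> 1 \<and> l \<ge> 1\<close> by arith
      show ?thesis using True \<open>a \<ge> 1 \<and> l \<ge> 1\<close> g_eqc[OF h] by simp
    next
      case False then have "l = 1" using eq \<open>a \<ge> 1 \<and> l \<ge> 1\<close> by simp
      then show ?thesis using False by (simp add: c0)
    qed
    have t3: "(if n \<ge> 3 \<and> a \<ge> 1 \<and> l \<ge> 2 then g (n-3) (a-1) (l-2) j' else 0) = c (a-1) (l-2) j'" for j'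
    proof (cases "n \<ge> 3 \<and> l \<ge> 2")
      case True
      then have h: "n - 3 + 1 = (a - 1) + (l - 2)" using eq \<open>a \<ge> 1 \<and> l \<ge> 1\<close> by arith
      show ?thesis using True \<open>a \<ge> 1 \<and> l \<ge> 1\<close> g_eqc[OF h] by simp
    next
      case False then have "a = 1 \<or> l - 2 = 0" using eq \<open>a \<ge> 1 \<and> l \<ge> 1\<close> by auto
      then show ?thesis using False by (auto simp add: c0)
    qed
    have t4: "(if n \<ge> 3 \<and> a \<ge> 1 \<and> l \<ge> 2 \<and> j \<ge> 1 then g (n-3) (a-1) (l-2) (j-1) else 0)
        = (if j \<ge> 1 then c (a-1) (l-2) (j-1) else 0)"
      using t3[of "j-1"] by (cases "j \<ge> 1") auto
    have t5: "(n = 1 \<and> a = 1 \<and> l = 1 \<and> j = 0) = (a = 1 \<and> l = 1 \<and> j = 0)" using eq by auto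
    have t6: "\<And>j0. (n = 2 \<and> a = 1 \<and> l = 2 \<and> j = j0) = (a = 1 \<and> l = 2 \<and> j = j0)" using eq by auto
    show ?thesis unfolding t0 t1 t2 t3 t4 t5 t6 using c_rec[of a l j] True by simp
  qed
qed

theorem mainTheorem2:
  shows "FD2_gf * (1 - (varX + varY) * varQ + (1 - varZ) * varX * varY ^ 2 * varQ ^ 3)
         = varX * varY * varQ * (1 - (1 - varZ) * varY * varQ)"
  by (intro fps_ext) (simp only: lhs_nth rhs_nth pointwise)

end
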